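(* Let $n\ge1$ with $\gcd(n,q)=1$, $\mathbb{F}\supseteq\mathbb{F}_q$ a field containing the $n$-th roots of unity, $\gamma$ a primitive $n$-th root of unity, $\ell\ge2$ and $t\ge0$ integers. Let $a,b\le n$ be positive integers with $\gcd(a,n)=\gcd(b,n)=1$, and let $S,R\subseteq\{1,\dots,n\}$ satisfy $|\overline{S}|\le|S|+\mathrm{d}_R-2$, $|S|>t$ and $\mathrm{d}_S>t$. Let $A,B\subseteq\mathbb{F}^n$ be the cyclic codes with generating sets $aS$ and $bR$ respectively, let $\tilde C=\{\mathbf{c}\in\mathbb{F}^n: M(aS+bR)\mathbf{c}^T=0\}$ and $k=\dim\tilde C$. Assume (i) $B^\perp*\tilde C^{i}\subsetneq\mathbb{F}^n$ for all $i\in\{1,\dots,\ell-1\}$; (ii) every nonzero cyclic subcode of $B$ is non-degenerated. Define integers $\delta$ and $\gamma_1,\dots,\gamma_{\ell-1}$ by $n-k=|S|+|R|-1+\delta$ and $\dim B=\dim\big((B^\perp*\tilde C^i)^\perp\big)+i\dim\tilde C-i+\gamma_i$ for $i=1,\dots,\ell-1$. If $$t\le \ell n-\Big[\frac{\ell(\ell+1)}{2}(k-1)+\ell(|S|+\delta)+\sum_{i=1}^{\ell-1}\gamma_i\Big],$$ then $(A,B)$ is an $\ell$-power $t$-error locating pair for $\tilde C$.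
   Context: For $T=\{i_1,\dots,i_m\}\subseteq\{1,\dots,n\}$ (indices mod $n$), $M(T)$ is the $m\times n$ matrix with rows $(1,\gamma^{i_j},\dots,\gamma^{(n-1)i_j})$; the code with generating set $T$ is $\{\mathbf{u}M(T):\mathbf{u}\in\mathbb{F}^m\}$. $\mathrm{d}_T$ denotes the minimum distance of $\{\mathbf{c}\in\mathbb{F}^n:M(T)\mathbf{c}^T=0\}$. $\overline{S}$ is the smallest set of consecutive indices modulo $n$ containing $S$; $aS=\{as\bmod n:s\in S\}$; $S+R=\{s+r\bmod n\}$. Componentwise product $*$, $X*Y$ the span of products, $X^1=X$, $X^i=X*X^{i-1}$; duals w.r.t. $\langle\mathbf{u},\mathbf{v}\rangle=\sum u_iv_i$ on $\mathbb{F}^n$; $\mathrm{d}$ minimum distance. A code $H$ is degenerated if $\dim\{\mathbf{x}:\mathbf{x}*H\subseteq H\}>1$, equivalently it is a direct sum of nonzero subcodes with disjoint supports or every generator matrix has a zero column. A pair $(A,B)$ of codes in $\mathbb{F}^n$ is an $\ell$-power $t$-error locating pair for a code $C$ if: (1) $A*B\subseteq C^\perp$; (2) $\dim A>t$; (3) $\mathrm{d}(A^\perp)>t$; (4) $\mathrm{d}(A)+\mathrm{d}(C)>n$; (5) $\dim B+\sum_{i=2}^{\ell}\dim(B^\perp*C^{i-1})^\perp\ge t$. *)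

theory Defs
  imports Complex_Main "HOL-Library.Function_Algebras"
begin

text \<open>Vectors of \<open>F^n\<close> are modelled as functions \<open>nat \<Rightarrow> 'a\<close> that vanish
  outside the index range \<open>{0..<n}\<close>; coordinate \<open>k\<close> corresponds to the
  column \<open>(\<gamma>^i)^k\<close> of \<open>M(T)\<close>, \<open>k = 0..n-1\<close>.\<close>

definition Fn :: "nat \<Rightarrow> (nat \<Rightarrow> 'a::field) set" where
  "Fn n = {v. \<forall>i\<ge>n. v i = 0}"

definition smul :: "'a::field \<Rightarrow> (nat \<Rightarrow> 'a) \<Rightarrow> (nat \<Rightarrow> 'a)" where
  "smul c v = (\<lambda>i. c * v i)"

definition lspan :: "(nat \<Rightarrow> 'a::field) set \<Rightarrow> (nat \<Rightarrow> 'a) set" where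
  "lspan X = module.span smul X"

definition is_subspace :: "(nat \<Rightarrow> 'a::field) set \<Rightarrow> bool" where
  "is_subspace X = module.subspace smul X"

definition cdim :: "(nat \<Rightarrow> 'a::field) set \<Rightarrow> nat" where
  "cdim X = vector_space.dim smul X"

definition vmul :: "(nat \<Rightarrow> 'a::field) \<Rightarrow> (nat \<Rightarrow> 'a) \<Rightarrow> (nat \<Rightarrow> 'a)" where
  "vmul u v = (\<lambda>i. u i * v i)"

definition starprod :: "(nat \<Rightarrow> 'a::field) set \<Rightarrow> (nat \<Rightarrow> 'a) set \<Rightarrow> (nat \<Rightarrow> 'a) set" where
  "starprod X Y = lspan {vmul x y | x y. x \<in> X \<and> y \<in> Y}"

text \<open>Powers \<open>X^1 = X\<close>, \<open>X^i = X * X^(i-1)\<close>; the value at 0 is irrelevant (never used).\<close>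
fun cpow :: "(nat \<Rightarrow> 'a::field) set \<Rightarrow> nat \<Rightarrow> (nat \<Rightarrow> 'a) set" where
  "cpow X 0 = X"
| "cpow X (Suc 0) = X"
| "cpow X (Suc (Suc i)) = starprod X (cpow X (Suc i))"

definition ip :: "nat \<Rightarrow> (nat \<Rightarrow> 'a::field) \<Rightarrow> (nat \<Rightarrow> 'a) \<Rightarrow> 'a" where
  "ip n u v = (\<Sum>i<n. u i * v i)"

definition dual :: "nat \<Rightarrow> (nat \<Rightarrow> 'a::field) set \<Rightarrow> (nat \<Rightarrow> 'a) set" where
  "dual n C = {v \<in> Fn n. \<forall>c\<in>C. ip n c v = 0}"

definition wt :: "nat \<Rightarrow> (nat \<Rightarrow> 'a::field) \<Rightarrow> nat" where
  "wt n v = card {i. i < n \<and> v i \<noteq> 0}"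

text \<open>Minimum distance; for the zero code we use the convention \<open>d = n + 1\<close>
  (standing in for \<open>\<infinity>\<close>; every nonzero codeword has weight \<open>\<le> n\<close>).\<close>
definition mindist :: "nat \<Rightarrow> (nat \<Rightarrow> 'a::field) set \<Rightarrow> nat" where
  "mindist n C = (if {c \<in> C. c \<noteq> 0} = {} then n + 1
                  else Min (wt n ` {c \<in> C. c \<noteq> 0}))"

text \<open>Row of \<open>M(T)\<close> for index \<open>i\<close>: \<open>(1, \<gamma>^i, \<dots>, \<gamma>^((n-1)i))\<close>.\<close>
definition vrow :: "nat \<Rightarrow> 'a::field \<Rightarrow> nat \<Rightarrow> (nat \<Rightarrow> 'a)" where
  "vrow n g i = (\<lambda>k. if k < n then g ^ (i * k) else 0)"

definition gen_code :: "nat \<Rightarrow> 'a::field \<Rightarrow> nat set \<Rightarrow> (nat \<Rightarrow> 'a) set" where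
  "gen_code n g T = lspan (vrow n g ` T)"

definition ker_code :: "nat \<Rightarrow> 'a::field \<Rightarrow> nat set \<Rightarrow> (nat \<Rightarrow> 'a) set" where
  "ker_code n g T = {c \<in> Fn n. \<forall>i\<in>T. (\<Sum>k<n. g ^ (i * k) * c k) = 0}"

definition dT :: "nat \<Rightarrow> 'a::field \<Rightarrow> nat set \<Rightarrow> nat" where
  "dT n g T = mindist n (ker_code n g (T :: nat set) :: (nat \<Rightarrow> 'a) set)"

definition smult_mod :: "nat \<Rightarrow> nat \<Rightarrow> nat set \<Rightarrow> nat set" where
  "smult_mod n a S = (\<lambda>s. a * s mod n) ` S"

definition sumset_mod :: "nat \<Rightarrow> nat set \<Rightarrow> nat set \<Rightarrow> nat set" where
  "sumset_mod n S R = {(s + r) mod n | s r. s \<in> S \<and> r \<in> R}"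

text \<open>\<open>|S-bar|\<close>: size of the smallest set of consecutive indices modulo \<open>n\<close>
  containing \<open>S\<close>.\<close>
definition cyc_interval :: "nat \<Rightarrow> nat \<Rightarrow> nat \<Rightarrow> nat set" where
  "cyc_interval n s L = {(s + j) mod n | j. j < L}"

definition closure_card :: "nat \<Rightarrow> nat set \<Rightarrow> nat" where
  "closure_card n S = Min {card (cyc_interval n s L) | s L.
       (\<lambda>x. x mod n) ` S \<subseteq> cyc_interval n s L}"

definition cshift :: "nat \<Rightarrow> (nat \<Rightarrow> 'a::field) \<Rightarrow> (nat \<Rightarrow> 'a)" where
  "cshift n v = (\<lambda>i. if i < n then v ((i + n - 1) mod n) else 0)"

definition is_cyclic :: "nat \<Rightarrow> (nat \<Rightarrow> 'a::field) set \<Rightarrow> bool" where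
  "is_cyclic n D \<longleftrightarrow> is_subspace D \<and> D \<subseteq> Fn n \<and> (\<forall>v\<in>D. cshift n v \<in> D)"

definition degenerated :: "nat \<Rightarrow> (nat \<Rightarrow> 'a::field) set \<Rightarrow> bool" where
  "degenerated n H \<longleftrightarrow> cdim {x \<in> Fn n. \<forall>h\<in>H. vmul x h \<in> H} > 1"

definition locating_pair ::
  "nat \<Rightarrow> nat \<Rightarrow> nat \<Rightarrow> (nat \<Rightarrow> 'a::field) set \<Rightarrow> (nat \<Rightarrow> 'a) set \<Rightarrow> (nat \<Rightarrow> 'a) set \<Rightarrow> bool"
  where
  "locating_pair n l t A B C \<longleftrightarrow>
     starprod A B \<subseteq> dual n C \<and>
     cdim A > t \<and>
     mindist n (dual n A) > t \<and>
     mindist n A + mindist n C > n \<and>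
     cdim B + (\<Sum>i=2..l. cdim (dual n (starprod (dual n B) (cpow C (i - 1))))) \<ge> t"

definition has_subfield_card :: "'a::field itself \<Rightarrow> nat \<Rightarrow> bool" where
  "has_subfield_card _ q \<longleftrightarrow> (\<exists>K :: 'a set. finite K \<and> card K = q \<and> 0 \<in> K \<and> 1 \<in> K \<and>
      (\<forall>x\<in>K. \<forall>y\<in>K. x + y \<in> K \<and> x * y \<in> K) \<and> (\<forall>x\<in>K. - x \<in> K \<and> inverse x \<in> K))"

end

theory Submission
  imports Defs "HOL-Computational_Algebra.Polynomial" "HOL-Number_Theory.Cong"
begin

lemma smul_vs: "vector_space (smul :: 'a::field \<Rightarrow> (nat \<Rightarrow> 'a) \<Rightarrow> _)"
  by unfold_locales (auto simp: smul_def fun_eq_iff algebra_simps)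

interpretation vs: vector_space "smul :: 'a::field \<Rightarrow> (nat \<Rightarrow> 'a) \<Rightarrow> _"
  by (rule smul_vs)

lemma lspan_eq: "lspan X = vs.span X"
  by (simp add: lspan_def)

lemma span_rep:
  fixes f :: "'b \<Rightarrow> nat \<Rightarrow> 'a::field"
  assumes "finite T" "x \<in> lspan (f ` T)"
  shows "\<exists>u. x = (\<lambda>k. \<Sum>t\<in>T. u t * f t k)"
  using assms(2) unfolding lspan_eq
proof (induction rule: vs.span_induct_alt)
  case base
  show ?case by (rule exI[of _ "\<lambda>_. 0"]) (simp add: fun_eq_iff zero_fun_def)
next
  case (step c x y)
  then obtain u where u: "y = (\<lambda>k. \<Sum>t\<in>T. u t * f t k)" by blast
  from step obtain t0 where t0: "t0 \<in> T" "x = f t0" by blast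
  show ?case
  proof (rule exI[of _ "\<lambda>t. u t + (if t = t0 then c else 0)"], rule ext)
    fix k
    have e1: "(\<Sum>t\<in>T. (u t + (if t = t0 then c else 0)) * f t k)
       = (\<Sum>t\<in>T. u t * f t k) + (\<Sum>t\<in>T. (if t = t0 then c else 0) * f t k)"
      by (simp add: distrib_right sum.distrib)
    have e2: "(\<Sum>t\<in>T. (if t = t0 then c else 0) * f t k) = (\<Sum>t\<in>T. (if t = t0 then c * f t k else 0))"
      by (rule sum.cong) auto
    have e3: "(\<Sum>t\<in>T. (if t = t0 then c * f t k else 0)) = c * f t0 k"
      using t0 assms(1) by simp
    show "(smul c x + y) k = (\<Sum>t\<in>T. (u t + (if t = t0 then c else 0)) * f t k)"
      using t0 u e1 e2 e3 by (simp add: smul_def add.commute)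
  qed
qed

lemma gpow_mod:
  assumes "g ^ n = (1::'a::field)" shows "g ^ e = g ^ (e mod n)"
proof -
  have "g ^ e = g ^ (n * (e div n) + e mod n)" by (metis div_mult_mod_eq mult.commute)
  also have "\<dots> = (g ^ n) ^ (e div n) * g ^ (e mod n)" by (simp only: power_add power_mult)
  finally show ?thesis by (simp add: assms)
qed

lemma gpow_cong:
  assumes "g ^ n = (1::'a::field)" "e mod n = e' mod n" shows "g ^ e = g ^ e'"
  using gpow_mod[OF assms(1), of e] gpow_mod[OF assms(1), of e'] assms(2) by simp

lemma g_ne0: assumes "g ^ n = (1::'a::field)" "n \<ge> 1" shows "g \<noteq> 0"
  using assms by (cases n) auto

lemma gpow_eq1:
  assumes "g ^ n = (1::'a::field)" "\<forall>m. 0 < m \<and> m < n \<longrightarrow> g ^ m \<noteq> 1" "n \<ge> 1"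
  shows "g ^ m = 1 \<longleftrightarrow> n dvd m"
proof
  assume "g ^ m = 1"
  hence "g ^ (m mod n) = 1" using gpow_mod[OF assms(1)] by metis
  moreover have "m mod n < n" using assms(3) by simp
  ultimately have "m mod n = 0" using assms(2) by (metis bot_nat_0.not_eq_extremum)
  thus "n dvd m" by auto
next
  assume "n dvd m" then obtain c where "m = n * c" by auto
  thus "g ^ m = 1" by (simp add: power_mult assms(1))
qed

lemma inj_beta:
  assumes "g ^ n = (1::'a::field)" "\<forall>m. 0 < m \<and> m < n \<longrightarrow> g ^ m \<noteq> 1" "n \<ge> 1"
    and "coprime e n"
  shows "inj_on (\<lambda>k. (g ^ e) ^ k) {..<n}"
proof -
  have g0: "g \<noteq> 0" using assms by (cases n) auto
  have *: "k1 = k2" if "k1 < n" "k2 < n" "k1 \<le> k2" "(g ^ e) ^ k1 = (g ^ e) ^ k2" for k1 k2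
  proof -
    have "g ^ (e * k2) = g ^ (e * k1) * g ^ (e * (k2 - k1))"
      using that(3) by (simp flip: power_add add: diff_mult_distrib2)
    with that(4) have "g ^ (e * (k2 - k1)) = 1" using g0
      by (simp add: power_mult)
    hence "n dvd e * (k2 - k1)" using gpow_eq1[OF assms(1-3)] by simp
    hence "n dvd (k2 - k1)" using assms(4)
      by (metis coprime_commute coprime_dvd_mult_right_iff)
    moreover have "k2 - k1 < n" using that by simp
    ultimately show ?thesis using that(3) by (metis diff_is_0_eq dvd_imp_le le_antisym not_le zero_less_diff)
  qed
  show ?thesis unfolding inj_on_def
    by (metis * lessThan_iff nat_le_linear)
qed

lemma wt_le: "wt n v \<le> n"
proof -
  have "{i. i < n \<and> v i \<noteq> 0} \<subseteq> {..<n}" by auto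
  hence "card {i. i < n \<and> v i \<noteq> 0} \<le> card {..<n}" by (intro card_mono) auto
  thus ?thesis by (simp add: wt_def)
qed

lemma wt_zero: "wt n 0 = 0" by (simp add: wt_def)

lemma wt_pos: assumes "v \<in> Fn n" "v \<noteq> 0" shows "wt n v > 0"
proof -
  obtain i where i: "v i \<noteq> 0" using assms(2) by (auto simp: fun_eq_iff)
  hence "i < n" using assms(1) by (auto simp: Fn_def not_le[symmetric])
  hence "i \<in> {i. i < n \<and> v i \<noteq> 0}" using i by auto
  moreover have "finite {i. i < n \<and> v i \<noteq> 0}" by simp
  ultimately show ?thesis unfolding wt_def by (auto simp: card_gt_0_iff)
qed

lemma mindist_le:
  assumes "c \<in> C" "c \<noteq> 0" shows "mindist n C \<le> wt n c"
proof -
  have fin: "finite (wt n ` {c \<in> C. c \<noteq> 0})"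
    by (rule finite_subset[of _ "{..n}"]) (auto simp: wt_le)
  have "wt n c \<in> wt n ` {c \<in> C. c \<noteq> 0}" using assms by auto
  hence "Min (wt n ` {c \<in> C. c \<noteq> 0}) \<le> wt n c" by (rule Min_le[OF fin])
  thus ?thesis using assms unfolding mindist_def by auto
qed

lemma mindist_ge:
  assumes "\<And>c. c \<in> C \<Longrightarrow> c \<noteq> 0 \<Longrightarrow> m \<le> wt n c" "m \<le> n + 1"
  shows "m \<le> mindist n C"
proof -
  have fin: "finite (wt n ` {c \<in> C. c \<noteq> 0})"
    by (rule finite_subset[of _ "{..n}"]) (auto simp: wt_le)
  show ?thesis
  proof (cases "{c \<in> C. c \<noteq> 0} = {}")
    case True thus ?thesis using assms(2) unfolding mindist_def by simp
  next
    case False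
    have "m \<le> Min (wt n ` {c \<in> C. c \<noteq> 0})"
      by (rule Min.boundedI[OF fin]) (use False assms(1) in auto)
    thus ?thesis unfolding mindist_def if_not_P[OF False] .
  qed
qed

lemma perm_exists:
  fixes g :: "'a::field"
  assumes "n \<ge> 1" "coprime e n" "g ^ n = 1"
  obtains P :: "(nat \<Rightarrow> 'a) \<Rightarrow> (nat \<Rightarrow> 'a)" where
    "\<And>v. P v \<in> Fn n"
    "\<And>v. wt n (P v) = wt n v"
    "\<And>v. v \<in> Fn n \<Longrightarrow> v \<noteq> 0 \<Longrightarrow> P v \<noteq> 0"
    "\<And>v i. (\<Sum>j<n. g ^ (i * j) * P v j) = (\<Sum>k<n. g ^ (i * e * k) * v k)"
proof -
  obtain e' where "[e * e' = Suc 0] (mod n)" using cong_solve_coprime_nat assms(2) by blast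
  hence ee: "(e * e') mod n = 1 mod n" by (simp add: cong_def)
  define pi where "pi k = e * k mod n" for k
  define rho where "rho j = e' * j mod n" for j
  have rp: "rho (pi k) = k" if "k < n" for k
  proof -
    have "rho (pi k) = (e' * (e * k)) mod n" unfolding rho_def pi_def by (simp add: mod_mult_right_eq)
    also have "\<dots> = ((e * e') * k) mod n" by (simp add: ac_simps)
    also have "\<dots> = ((e * e') mod n * k) mod n" by (simp add: mod_mult_left_eq)
    also have "\<dots> = (1 mod n * k) mod n" by (simp only: ee)
    also have "\<dots> = k" using that by (cases "n = 1") auto
    finally show ?thesis .
  qed
  have pr: "pi (rho j) = j" if "j < n" for j
  proof -
    have "pi (rho j) = (e * (e' * j)) mod n" unfolding rho_def pi_def by (simp add: mod_mult_right_eq)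
    also have "\<dots> = ((e * e') * j) mod n" by (simp add: ac_simps)
    also have "\<dots> = ((e * e') mod n * j) mod n" by (simp add: mod_mult_left_eq)
    also have "\<dots> = (1 mod n * j) mod n" by (simp only: ee)
    also have "\<dots> = j" using that by (cases "n = 1") auto
    finally show ?thesis .
  qed
  have pin: "pi k < n" for k using assms(1) by (simp add: pi_def)
  have rhon: "rho k < n" for k using assms(1) by (simp add: rho_def)
  have bij: "bij_betw pi {..<n} {..<n}"
    by (rule bij_betw_byWitness[where f'=rho]) (auto simp: rp pr pin rhon)
  define P where "P v = (\<lambda>j. if j < n then v (rho j) else (0::'a))" for v :: "nat \<Rightarrow> 'a"
  have wtP: "wt n (P v) = wt n v" for v
  proof -
    have "{j. j < n \<and> P v j \<noteq> 0} = pi ` {k. k < n \<and> v k \<noteq> 0}"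
    proof safe
      fix j assume "j < n" "P v j \<noteq> 0"
      thus "j \<in> pi ` {k. k < n \<and> v k \<noteq> 0}"
        using pr[of j] rhon[of j] by (auto simp: P_def intro!: image_eqI[of _ _ "rho j"])
    next
      fix k assume "k < n" "v k \<noteq> 0"
      thus "pi k < n" "P v (pi k) = 0 \<Longrightarrow> False" using pin rp by (auto simp: P_def)
    qed
    moreover have "inj_on pi {k. k < n \<and> v k \<noteq> 0}"
      using bij by (rule bij_betw_imp_inj_on[THEN inj_on_subset]) auto
    ultimately show ?thesis unfolding wt_def by (simp add: card_image)
  qed
  have sumP: "(\<Sum>j<n. g ^ (i * j) * P v j) = (\<Sum>k<n. g ^ (i * e * k) * v k)" for v i
  proof -
    have "(\<Sum>j<n. g ^ (i * j) * P v j) = (\<Sum>j<n. g ^ (i * j) * v (rho j))"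
      by (rule sum.cong) (auto simp: P_def)
    also have "\<dots> = (\<Sum>k<n. g ^ (i * pi k) * v (rho (pi k)))"
      by (rule sum.reindex_bij_betw[OF bij, symmetric])
    also have "\<dots> = (\<Sum>k<n. g ^ (i * e * k) * v k)"
    proof (rule sum.cong)
      fix k assume k: "k \<in> {..<n}"
      have "(i * pi k) mod n = (i * e * k) mod n"
        unfolding pi_def by (simp add: mod_mult_right_eq mult.assoc)
      hence "g ^ (i * pi k) = g ^ (i * e * k)" by (rule gpow_cong[OF assms(3)])
      thus "g ^ (i * pi k) * v (rho (pi k)) = g ^ (i * e * k) * v k"
        using rp k by simp
    qed simp
    finally show ?thesis .
  qed
  show ?thesis
  proof (rule that[of P])
    show "P v \<in> Fn n" for v by (simp add: P_def Fn_def)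
    show "wt n (P v) = wt n v" for v by (rule wtP)
    show "P v \<noteq> 0" if "v \<in> Fn n" "v \<noteq> 0" for v
      using wt_pos[OF that] wtP[of v] wt_zero by (metis less_irrefl)
    show "(\<Sum>j<n. g ^ (i * j) * P v j) = (\<Sum>k<n. g ^ (i * e * k) * v k)" for v i by (rule sumP)
  qed
qed

lemma ker_wt:
  fixes g :: "'a::field"
  assumes "n \<ge> 1" "coprime e n" "g ^ n = 1" "v \<in> Fn n" "v \<noteq> 0"
    "\<forall>t\<in>T. (\<Sum>k<n. g ^ (t * e * k) * v k) = 0"
  shows "dT n g T \<le> wt n v"
proof -
  obtain P :: "(nat \<Rightarrow> 'a) \<Rightarrow> (nat \<Rightarrow> 'a)" where P:
    "\<And>v. P v \<in> Fn n"
    "\<And>v. wt n (P v) = wt n v"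
    "\<And>v. v \<in> Fn n \<Longrightarrow> v \<noteq> 0 \<Longrightarrow> P v \<noteq> 0"
    "\<And>v i. (\<Sum>j<n. g ^ (i * j) * P v j) = (\<Sum>k<n. g ^ (i * e * k) * v k)"
    using perm_exists[OF assms(1-3)] by blast
  have "P v \<in> ker_code n g T"
    unfolding ker_code_def
  proof safe
    show "P v \<in> Fn n" by (rule P(1))
    fix i assume "i \<in> T"
    thus "(\<Sum>k<n. g ^ (i * k) * P v k) = 0" using assms(6) \<open>i \<in> T\<close> P(4)[of i v]
      by simp
  qed
  hence "dT n g T \<le> wt n (P v)" unfolding dT_def using P(3)[OF assms(4,5)] by (rule mindist_le)
  thus ?thesis using P(2) by simp
qed


lemma fsum_apply: "(\<Sum>v\<in>V. f v) k = (\<Sum>v\<in>V. f v k)"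
  by (induct V rule: infinite_finite_induct) (auto simp: zero_fun_def)

lemma few_roots:
  fixes p :: "'a::field poly"
  assumes "p \<noteq> 0" "inj_on f K" "\<forall>k\<in>K. poly p (f k) = 0"
  shows "card K \<le> degree p"
proof -
  have "f ` K \<subseteq> {x. poly p x = 0}" using assms(3) by auto
  hence "card (f ` K) \<le> card {x. poly p x = 0}"
    by (intro card_mono) (use poly_roots_finite[OF assms(1)] in auto)
  also have "\<dots> \<le> degree p" by (rule card_poly_roots_bound[OF assms(1)])
  finally show ?thesis using card_image[OF assms(2)] by simp
qed

lemma coeff_sum_monom_set:
  assumes "finite T" "i \<in> T"
  shows "coeff (\<Sum>j\<in>T. monom (u j) j) i = u i"
proof -
  have "coeff (\<Sum>j\<in>T. monom (u j) j) i = (\<Sum>j\<in>T. if j = i then u j else 0)"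
    by (simp add: coeff_sum coeff_monom)
  also have "\<dots> = u i" using assms by (simp add: sum.delta')
  finally show ?thesis .
qed

lemma degree_sum_monom_less:
  assumes "finite T" "\<forall>j\<in>T. j < m" "m > 0"
  shows "degree (\<Sum>j\<in>T. monom (u j) j :: 'a::field poly) < m"
proof -
  have "degree (\<Sum>j\<in>T. monom (u j) j :: 'a poly) \<le> m - 1"
  proof (rule degree_sum_le[OF assms(1)])
    fix p assume "p \<in> T"
    hence "p \<le> m - 1" using assms by fastforce
    thus "degree (monom (u p) p :: 'a poly) \<le> m - 1" using degree_monom_le[of "u p" p] by linarith
  qed
  thus ?thesis using assms(3) by simp
qed

lemma poly_sum_monom: "poly (\<Sum>j\<in>T. monom (u j) j) x = (\<Sum>j\<in>T. u j * x ^ j)" for x :: "'a::field"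
  by (simp add: poly_sum poly_monom)

context
  fixes n :: nat and g :: "'a::field"
  assumes gn: "g ^ n = 1" and prim: "\<forall>m. 0 < m \<and> m < n \<longrightarrow> g ^ m \<noteq> 1" and n1: "n \<ge> 1"
begin

lemma inj_vrow: "inj_on (vrow n g) {..<n}"
proof (cases "n = 1")
  case True thus ?thesis by (auto simp: inj_on_def)
next
  case False
  hence "1 < n" using n1 by simp
  show ?thesis
  proof (rule inj_onI)
    fix i j assume ij: "i \<in> {..<n}" "j \<in> {..<n}" "vrow n g i = vrow n g j"
    hence "vrow n g i 1 = vrow n g j 1" by simp
    hence "(g ^ 1) ^ i = (g ^ 1) ^ j" using \<open>1 < n\<close> by (simp add: vrow_def)
    thus "i = j" using inj_beta[OF gn prim n1, of 1] ij(1,2) by (auto simp: inj_on_def)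
  qed
qed

lemma indep_rows:
  assumes "T \<subseteq> {..<n}"
  shows "vs.independent (vrow n g ` T)"
proof
  have fin: "finite T" using assms finite_subset by blast
  assume "vs.dependent (vrow n g ` T)"
  then obtain u where u: "\<exists>v\<in>vrow n g ` T. u v \<noteq> 0" "(\<Sum>v\<in>vrow n g ` T. smul (u v) v) = 0"
    using vs.dependent_finite[of "vrow n g ` T"] fin by blast
  have inj: "inj_on (vrow n g) T" using inj_vrow assms inj_on_subset by blast
  define w where "w i = u (vrow n g i)" for i
  obtain i0 where i0: "i0 \<in> T" "w i0 \<noteq> 0" using u(1) by (auto simp: w_def)
  have s0: "(\<Sum>i\<in>T. smul (w i) (vrow n g i)) = 0"
    using u(2) by (simp add: sum.reindex[OF inj] w_def)
  define p where "p = (\<Sum>i\<in>T. monom (w i) i)"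
  have roots: "\<forall>k\<in>{..<n}. poly p ((g ^ 1) ^ k) = 0"
  proof
    fix k assume k: "k \<in> {..<n}"
    have "0 = (\<Sum>i\<in>T. smul (w i) (vrow n g i)) k" using s0 by simp
    also have "\<dots> = (\<Sum>i\<in>T. w i * g ^ (i * k))" using k by (simp add: fsum_apply smul_def vrow_def)
    also have "\<dots> = poly p ((g ^ 1) ^ k)" unfolding p_def poly_sum_monom
      by (simp add: power_mult[symmetric] mult.commute)
    finally show "poly p ((g ^ 1) ^ k) = 0" by simp
  qed
  have "p \<noteq> 0"
  proof
    assume "p = 0"
    hence "coeff p i0 = 0" by simp
    thus False using coeff_sum_monom_set[OF fin i0(1), of w] i0(2) by (simp add: p_def)
  qed
  have "degree p < n" unfolding p_def using degree_sum_monom_less[OF fin] assms n1 by auto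
  moreover have "card {..<n} \<le> degree p"
    by (rule few_roots[OF \<open>p \<noteq> 0\<close> inj_beta[OF gn prim n1] roots]) simp
  ultimately show False by simp
qed

lemma dim_gen_code:
  assumes "T \<subseteq> {..<n}"
  shows "cdim (gen_code n g T) = card T"
proof -
  have inj: "inj_on (vrow n g) T" using inj_vrow assms inj_on_subset by blast
  have "cdim (gen_code n g T) = card (vrow n g ` T)"
    unfolding cdim_def gen_code_def lspan_eq
    by (rule vs.dim_span_eq_card_independent[OF indep_rows[OF assms]])
  thus ?thesis using card_image[OF inj] by simp
qed

end


lemma inj_mod: fixes S :: "nat set" assumes "S \<subseteq> {1..n}" shows "inj_on (\<lambda>s. s mod n) S"
proof -
  have m: "s mod n = (if s = n then 0 else s)" if "s \<in> S" for s
    using assms that by auto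
  show ?thesis
  proof (rule inj_onI)
    fix x y assume "x \<in> S" "y \<in> S" "x mod n = y mod n"
    thus "x = y" using m[of x] m[of y] assms by (auto split: if_splits)
  qed
qed

lemma smult_inj:
  fixes S :: "nat set"
  assumes "coprime a n" "S \<subseteq> {1..n}"
  shows "inj_on (\<lambda>s. a * s mod n) S"
proof (rule inj_onI)
  fix x y assume xy: "x \<in> S" "y \<in> S" "a * x mod n = a * y mod n"
  hence "[a * x = a * y] (mod n)" by (simp add: cong_def)
  hence "[x = y] (mod n)" using cong_mult_lcancel_nat assms(1) by blast
  hence "x mod n = y mod n" by (simp add: cong_def)
  thus "x = y" using inj_mod[OF assms(2)] xy(1,2) by (auto simp: inj_on_def)
qed

lemma card_smult: "coprime a n \<Longrightarrow> S \<subseteq> {1..n} \<Longrightarrow> card (smult_mod n a S) = card S"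
  unfolding smult_mod_def by (rule card_image[OF smult_inj])

lemma smult_sub: "n \<ge> 1 \<Longrightarrow> smult_mod n a S \<subseteq> {..<n}"
  unfolding smult_mod_def by auto

lemma ip_lin: "ip n c (smul a x + y) = a * ip n c x + ip n c (y :: nat \<Rightarrow> 'a::field)"
  unfolding ip_def smul_def by (simp add: sum_distrib_left sum.distrib algebra_simps)

lemma ip_zero: "ip n c (0 :: nat \<Rightarrow> 'a::field) = 0"
  unfolding ip_def by simp

lemma vmul_lin_l: "vmul (smul a x + y) z = smul a (vmul x z) + vmul y (z :: nat \<Rightarrow> 'a::field)"
  unfolding vmul_def smul_def by (simp add: fun_eq_iff algebra_simps)

lemma vmul_lin_r: "vmul z (smul a x + y) = smul a (vmul z x) + vmul z (y :: nat \<Rightarrow> 'a::field)"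
  unfolding vmul_def smul_def by (simp add: fun_eq_iff algebra_simps)

lemma vmul_zero: "vmul x (0 :: nat \<Rightarrow> 'a::field) = 0" "vmul 0 x = (0 :: nat \<Rightarrow> 'a::field)"
  unfolding vmul_def by (simp_all add: fun_eq_iff)

lemma Fn_subspace: "vs.subspace (Fn n :: (nat \<Rightarrow> 'a::field) set)"
  unfolding vs.subspace_def Fn_def smul_def by auto

lemma dual_subspace: "vs.subspace (dual n C :: (nat \<Rightarrow> 'a::field) set)"
proof -
  have "ip n c (x + y) = ip n c x + ip n c y" for c x y :: "nat \<Rightarrow> 'a"
    unfolding ip_def by (simp add: sum.distrib algebra_simps)
  moreover have "ip n c (smul a x) = a * ip n c x" for c x :: "nat \<Rightarrow> 'a" and a
    unfolding ip_def smul_def by (simp add: sum_distrib_left algebra_simps)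
  ultimately show ?thesis
    using Fn_subspace[of n] unfolding vs.subspace_def dual_def by (auto simp: ip_zero)
qed

lemma vrow_Fn: "vrow n g i \<in> Fn n"
  unfolding vrow_def Fn_def by auto

lemma gen_sub_Fn: "gen_code n g T \<subseteq> Fn n"
  unfolding gen_code_def lspan_eq
  by (rule vs.span_minimal[OF _ Fn_subspace]) (auto simp: vrow_Fn)

lemma dual_sub_ker: "dual n (gen_code n g T) \<subseteq> ker_code n g T"
proof
  fix c assume c: "c \<in> dual n (gen_code n g T)"
  show "c \<in> ker_code n g T" unfolding ker_code_def
  proof safe
    show "c \<in> Fn n" using c by (simp add: dual_def)
    fix i assume "i \<in> T"
    hence "vrow n g i \<in> gen_code n g T" unfolding gen_code_def lspan_eq by (auto intro: vs.span_base)
    hence "ip n (vrow n g i) c = 0" using c by (simp add: dual_def)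
    thus "(\<Sum>k<n. g ^ (i * k) * c k) = 0" by (simp add: ip_def vrow_def)
  qed
qed

lemma starprod_sub:
  fixes g :: "'a::field"
  assumes "\<And>i j c. i \<in> T1 \<Longrightarrow> j \<in> T2 \<Longrightarrow> c \<in> C \<Longrightarrow> (\<Sum>k<n. g ^ ((i + j) * k) * c k) = 0"
  shows "starprod (gen_code n g T1) (gen_code n g T2) \<subseteq> dual n C"
  unfolding starprod_def lspan_eq
proof (rule vs.span_minimal[OF _ dual_subspace], safe)
  fix x y assume x: "x \<in> gen_code n g T1" and y: "y \<in> gen_code n g T2"
  have base: "ip n c (vmul (vrow n g i) (vrow n g j)) = 0" if "i \<in> T1" "j \<in> T2" "c \<in> C" for i j c
  proof -
    have "ip n c (vmul (vrow n g i) (vrow n g j)) = (\<Sum>k<n. g ^ ((i + j) * k) * c k)"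
      unfolding ip_def vmul_def vrow_def by (rule sum.cong) (auto simp: power_add add_mult_distrib)
    thus ?thesis using assms that by simp
  qed
  have st1: "ip n c (vmul (vrow n g i) y) = 0" if "i \<in> T1" "c \<in> C" "y \<in> gen_code n g T2" for i c y
    using that(3) unfolding gen_code_def lspan_eq
  proof (induction rule: vs.span_induct_alt)
    case base thus ?case by (simp add: vmul_def ip_def)
  next
    case (step a x y)
    from step(1) obtain j where j: "j \<in> T2" "x = vrow n g j" by blast
    have "ip n c (vmul (vrow n g i) (smul a x + y)) = a * ip n c (vmul (vrow n g i) x) + ip n c (vmul (vrow n g i) y)"
      by (simp only: vmul_lin_r ip_lin)
    thus ?case using step(2) base[OF that(1) j(1) that(2)] j(2) by (simp add: plus_fun_def)
  qed
  have st2: "ip n c (vmul x y) = 0" if "c \<in> C" "x \<in> gen_code n g T1" for c x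
    using that(2) unfolding gen_code_def lspan_eq
  proof (induction rule: vs.span_induct_alt)
    case base thus ?case by (simp add: vmul_def ip_def)
  next
    case (step a x' y')
    from step(1) obtain i where i: "i \<in> T1" "x' = vrow n g i" by blast
    have "ip n c (vmul (smul a x' + y') y) = a * ip n c (vmul x' y) + ip n c (vmul y' y)"
      by (simp only: vmul_lin_l ip_lin)
    thus ?case using step(2) st1[OF i(1) that(1) y] i(2) by (simp add: plus_fun_def)
  qed
  have "vmul x y \<in> Fn n" using gen_sub_Fn[of n g T1] x by (auto simp: Fn_def vmul_def)
  thus "vmul x y \<in> dual n C" using st2[OF _ x] by (simp add: dual_def)
qed

lemma C_orth:
  fixes g :: "'a::field"
  assumes gn: "g ^ n = 1"
    and c: "c \<in> ker_code n g (sumset_mod n (smult_mod n a S) (smult_mod n b R))"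
    and "s \<in> S" "r \<in> R"
  shows "(\<Sum>k<n. g ^ ((a * s + b * r) * k) * c k) = 0"
proof -
  define i where "i = ((a * s mod n) + (b * r mod n)) mod n"
  have "i \<in> sumset_mod n (smult_mod n a S) (smult_mod n b R)"
    unfolding i_def sumset_mod_def smult_mod_def using assms(3,4) by blast
  hence "(\<Sum>k<n. g ^ (i * k) * c k) = 0" using c by (simp add: ker_code_def)
  moreover have "g ^ (i * k) = g ^ ((a * s + b * r) * k)" for k
  proof (rule gpow_cong[OF gn])
    have "i mod n = (a * s + b * r) mod n" unfolding i_def by (simp add: mod_add_eq)
    thus "i * k mod n = (a * s + b * r) * k mod n" by (metis mod_mult_left_eq)
  qed
  ultimately show ?thesis by simp
qed


lemma linsol_gen:
  fixes E :: "'e set"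
  assumes "finite E"
  shows "\<forall>(U :: 'u set) (\<phi> :: 'e \<Rightarrow> 'u \<Rightarrow> 'a::field). finite U \<longrightarrow> card E < card U \<longrightarrow>
     (\<exists>x. (\<exists>i\<in>U. x i \<noteq> 0) \<and> (\<forall>e\<in>E. (\<Sum>i\<in>U. \<phi> e i * x i) = 0))"
  using assms
proof (induction E rule: finite_induct)
  case empty
  show ?case
  proof (intro allI impI)
    fix U :: "'u set" and \<phi> :: "'e \<Rightarrow> 'u \<Rightarrow> 'a"
    assume "finite U" "card {} < card U"
    hence "U \<noteq> {}" by auto
    then obtain i where "i \<in> U" by blast
    thus "\<exists>x. (\<exists>i\<in>U. x i \<noteq> 0) \<and> (\<forall>e\<in>{}. (\<Sum>i\<in>U. \<phi> e i * x i) = 0)"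
      by (intro exI[of _ "\<lambda>_. 1"]) auto
  qed
next
  case (insert e E)
  show ?case
  proof (intro allI impI)
    fix U :: "'u set" and \<phi> :: "'e \<Rightarrow> 'u \<Rightarrow> 'a"
    assume U: "finite U" "card (insert e E) < card U"
    have cE: "card E + 1 < card U" using U insert by simp
    show "\<exists>x. (\<exists>i\<in>U. x i \<noteq> 0) \<and> (\<forall>e'\<in>insert e E. (\<Sum>i\<in>U. \<phi> e' i * x i) = 0)"
    proof (cases "\<forall>i\<in>U. \<phi> e i = 0")
      case True
      have cE': "card E < card U" using cE by simp
      obtain x where x: "\<exists>i\<in>U. x i \<noteq> 0" "\<forall>e'\<in>E. (\<Sum>i\<in>U. \<phi> e' i * x i) = 0"
        using insert.IH[rule_format, OF U(1) cE', of \<phi>] by blast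
      thus ?thesis using True by (intro exI[of _ x]) auto
    next
      case False
      then obtain u0 where u0: "u0 \<in> U" "\<phi> e u0 \<noteq> 0" by blast
      define U' where "U' = U - {u0}"
      have U': "finite U'" "card E < card U'" using U u0 cE by (auto simp: U'_def)
      define \<psi> where "\<psi> e' i = \<phi> e' i - \<phi> e' u0 * \<phi> e i / \<phi> e u0" for e' i
      obtain x' where x': "\<exists>i\<in>U'. x' i \<noteq> 0" "\<forall>e'\<in>E. (\<Sum>i\<in>U'. \<psi> e' i * x' i) = 0"
        using insert.IH[rule_format, OF U'(1) U'(2), of \<psi>] by blast
      define x where "x i = (if i = u0 then - (\<Sum>i\<in>U'. \<phi> e i * x' i) / \<phi> e u0 else x' i)" for i
      have sU: "(\<Sum>i\<in>U. f i) = f u0 + (\<Sum>i\<in>U'. f i)" for f :: "'u \<Rightarrow> 'a"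
        unfolding U'_def using U(1) u0(1) by (rule sum.remove)
      have xU': "(\<Sum>i\<in>U'. f i * x i) = (\<Sum>i\<in>U'. f i * x' i)" for f :: "'u \<Rightarrow> 'a"
        by (rule sum.cong) (auto simp: x_def U'_def)
      have ex: "\<exists>i\<in>U. x i \<noteq> 0" using x'(1) by (auto simp: x_def U'_def)
      have ee: "(\<Sum>i\<in>U. \<phi> e i * x i) = 0"
        unfolding sU xU' using u0(2) by (simp add: x_def)
      have eE: "(\<Sum>i\<in>U. \<phi> e' i * x i) = 0" if "e' \<in> E" for e'
      proof -
        have "(\<Sum>i\<in>U. \<phi> e' i * x i) = \<phi> e' u0 * x u0 + (\<Sum>i\<in>U'. \<phi> e' i * x' i)"
          unfolding sU xU' ..
        also have "\<dots> = (\<Sum>i\<in>U'. \<psi> e' i * x' i)"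
        proof -
          have pw: "\<psi> e' i * x' i = \<phi> e' i * x' i - (\<phi> e' u0 / \<phi> e u0) * (\<phi> e i * x' i)" for i
            unfolding \<psi>_def by (simp add: algebra_simps)
          have "(\<Sum>i\<in>U'. \<psi> e' i * x' i) = (\<Sum>i\<in>U'. \<phi> e' i * x' i) - (\<phi> e' u0 / \<phi> e u0) * (\<Sum>i\<in>U'. \<phi> e i * x' i)"
            unfolding pw by (simp add: sum_subtractf sum_distrib_left)
          moreover have "\<phi> e' u0 * x u0 = - (\<phi> e' u0 / \<phi> e u0) * (\<Sum>i\<in>U'. \<phi> e i * x' i)"
            by (simp add: x_def)
          ultimately show ?thesis by simp
        qed
        also have "\<dots> = 0" using x'(2) that by blast
        finally show ?thesis .
      qed
      show ?thesis using ex ee eE by (intro exI[of _ x]) auto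
    qed
  qed
qed

lemma linsol:
  fixes \<phi> :: "nat \<Rightarrow> nat \<Rightarrow> 'a::field"
  assumes "finite G" "card G < N"
  shows "\<exists>x. (\<exists>i<N. x i \<noteq> 0) \<and> (\<forall>j\<in>G. (\<Sum>i<N. \<phi> j i * x i) = 0)"
proof -
  have "finite {..<N}" "card G < card {..<N}" using assms by auto
  from linsol_gen[OF assms(1), rule_format, OF this, of \<phi>] show ?thesis by auto
qed


lemma cyc_sub: "n \<ge> 1 \<Longrightarrow> cyc_interval n s L \<subseteq> {..<n}"
  unfolding cyc_interval_def by auto

lemma cyc_full:
  assumes "n \<ge> 1" "L \<ge> n"
  shows "cyc_interval n s L = {..<n}"
proof
  show "cyc_interval n s L \<subseteq> {..<n}" using cyc_sub assms(1) .
  show "{..<n} \<subseteq> cyc_interval n s L"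
  proof
    fix x assume x: "x \<in> {..<n}"
    define j where "j = (x + (n - s mod n)) mod n"
    have m: "s mod n < n" using assms by simp
    have d: "n * (s div n) + s mod n = s" by (rule mult_div_mod_eq)
    have e1: "n * (s div n + 1) = n * (s div n) + n" by simp
    have eqn: "s + (x + (n - s mod n)) = x + n * (s div n + 1)" using m d e1 by linarith
    have "(s + j) mod n = (s + (x + (n - s mod n))) mod n" by (simp add: j_def mod_add_right_eq)
    also have "\<dots> = (x + n * (s div n + 1)) mod n" by (simp only: eqn)
    also have "\<dots> = x mod n" by (rule mod_mult_self2)
    also have "\<dots> = x" using x by simp
    finally have "(s + j) mod n = x" .
    moreover have "j < L" unfolding j_def using assms by (meson order_less_le_trans mod_less_divisor less_le_trans not_less zero_less_one)
    ultimately show "x \<in> cyc_interval n s L" unfolding cyc_interval_def by blast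
  qed
qed

lemma cyc_card:
  assumes "L \<le> n"
  shows "card (cyc_interval n s L) = L"
proof -
  have eq: "cyc_interval n s L = (\<lambda>j. (s + j) mod n) ` {..<L}"
    unfolding cyc_interval_def by auto
  have "inj_on (\<lambda>j. (s + j) mod n) {..<L}"
  proof (rule inj_onI)
    fix x y assume xy: "x \<in> {..<L}" "y \<in> {..<L}" "(s + x) mod n = (s + y) mod n"
    hence "[s + x = s + y] (mod n)" by (simp add: cong_def)
    hence "[x = y] (mod n)" by (simp add: cong_add_lcancel_nat)
    thus "x = y" using xy assms by (simp add: cong_def)
  qed
  thus ?thesis unfolding eq by (simp add: card_image)
qed

lemma interval_setup:
  fixes S :: "nat set"
  assumes n1: "n \<ge> 1" and SR: "S \<subseteq> {1..n}"
  obtains s0 L where "L \<le> n" "closure_card n S = L"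
    "\<forall>s\<in>S. \<exists>j<L. s mod n = (s0 + j) mod n" "card S \<le> L"
proof -
  define Q where "Q = {card (cyc_interval n s L) | s L. (\<lambda>x. x mod n) ` S \<subseteq> cyc_interval n s L}"
  have Sm: "(\<lambda>x. x mod n) ` S \<subseteq> {..<n}" using n1 by auto
  have "card (cyc_interval n 0 n) \<in> Q" unfolding Q_def using cyc_full[OF n1, of n 0] Sm by blast
  hence Qne: "Q \<noteq> {}" by auto
  have "Q \<subseteq> {..n}"
  proof
    fix q assume "q \<in> Q"
    then obtain s L where "q = card (cyc_interval n s L)" unfolding Q_def by blast
    moreover have "card (cyc_interval n s L) \<le> card {..<n}" by (rule card_mono) (use cyc_sub n1 in auto)
    ultimately show "q \<in> {..n}" by simp
  qed
  hence Qf: "finite Q" using finite_subset by blast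
  have cc: "closure_card n S = Min Q" unfolding closure_card_def Q_def ..
  have "Min Q \<in> Q" using Qf Qne by (rule Min_in)
  then obtain s0 L' where sub: "(\<lambda>x. x mod n) ` S \<subseteq> cyc_interval n s0 L'"
    and mq: "Min Q = card (cyc_interval n s0 L')" unfolding Q_def by blast
  define L where "L = min L' n"
  have same: "cyc_interval n s0 L' = cyc_interval n s0 L"
  proof (cases "L' \<le> n")
    case True thus ?thesis by (simp add: L_def)
  next
    case False thus ?thesis using cyc_full[OF n1, of L' s0] cyc_full[OF n1, of L s0] by (simp add: L_def)
  qed
  have Ln: "L \<le> n" by (simp add: L_def)
  have cL: "card (cyc_interval n s0 L) = L" by (rule cyc_card[OF Ln])
  show ?thesis
  proof (rule that[of L s0])
    show "L \<le> n" by (rule Ln)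
    show "closure_card n S = L" using cc mq same cL by simp
    show "\<forall>s\<in>S. \<exists>j<L. s mod n = (s0 + j) mod n"
    proof
      fix s assume "s \<in> S"
      hence "s mod n \<in> cyc_interval n s0 L" using sub same by auto
      thus "\<exists>j<L. s mod n = (s0 + j) mod n" unfolding cyc_interval_def by auto
    qed
    have "card S = card ((\<lambda>x. x mod n) ` S)" using card_image[OF inj_mod[OF SR]] by simp
    also have "\<dots> \<le> card (cyc_interval n s0 L)"
      by (rule card_mono) (use sub same finite_subset[OF cyc_sub[OF n1, of s0 L]] in auto)
    finally show "card S \<le> L" using cL by simp
  qed
qed


context
  fixes n :: nat and g :: "'a::field" and a :: nat and S :: "nat set" and s0 L :: nat
    and js :: "nat \<Rightarrow> nat"
  assumes gn: "g ^ n = 1" and prim: "\<forall>m. 0 < m \<and> m < n \<longrightarrow> g ^ m \<noteq> 1" and n1: "n \<ge> 1"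
    and ca: "coprime a n" and SR: "S \<subseteq> {1..n}"
    and js: "\<forall>s\<in>S. js s < L \<and> s mod n = (s0 + js s) mod n"
begin

lemma g0: "g \<noteq> 0" using gn n1 by (cases n) auto

lemma finS: "finite S" using SR finite_subset by blast

lemma expo:
  assumes "s \<in> S"
  shows "(g ^ a) ^ (s0 * k) * ((g ^ a) ^ k) ^ (js s) = g ^ (a * s * k)"
proof -
  have "(g ^ a) ^ (s0 * k) * ((g ^ a) ^ k) ^ (js s) = g ^ (a * (s0 + js s) * k)"
    by (simp add: power_mult[symmetric] power_add[symmetric] algebra_simps)
  also have "\<dots> = g ^ (a * s * k)"
  proof (rule gpow_cong[OF gn])
    have "[s0 + js s = s] (mod n)" using js assms by (simp add: cong_def)
    hence "[a * (s0 + js s) * k = a * s * k] (mod n)" by (intro cong_mult cong_refl)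
    thus "a * (s0 + js s) * k mod n = a * s * k mod n" by (simp add: cong_def)
  qed
  finally show ?thesis .
qed

lemma gmodk: "g ^ ((a * s mod n) * k) = g ^ (a * s * k)"
  by (rule gpow_cong[OF gn]) (metis mod_mult_left_eq)

lemma inj_js: "inj_on js S"
proof (rule inj_onI)
  fix x y assume "x \<in> S" "y \<in> S" "js x = js y"
  hence "x mod n = y mod n" using js by metis
  thus "x = y" using inj_mod[OF SR] \<open>x \<in> S\<close> \<open>y \<in> S\<close> by (auto simp: inj_on_def)
qed

lemma zeros_count:
  fixes x :: "nat \<Rightarrow> 'a"
  shows "wt n x + card {k. k < n \<and> x k = 0} = n"
proof -
  have "{k. k < n \<and> x k \<noteq> 0} \<union> {k. k < n \<and> x k = 0} = {..<n}" by auto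
  moreover have "{k. k < n \<and> x k \<noteq> 0} \<inter> {k. k < n \<and> x k = 0} = {}" by auto
  ultimately have "card {k. k < n \<and> x k \<noteq> 0} + card {k. k < n \<and> x k = 0} = card {..<n}"
    by (metis card_Un_disjoint finite_Un finite_lessThan)
  thus ?thesis by (simp add: wt_def)
qed

lemma distA:
  assumes x: "x \<in> gen_code n g (smult_mod n a S)" and x0: "x \<noteq> 0"
  shows "n < wt n x + L"
proof -
  have "gen_code n g (smult_mod n a S) = lspan ((\<lambda>s. vrow n g (a * s mod n)) ` S)"
    unfolding gen_code_def smult_mod_def by (simp add: image_comp o_def)
  then obtain u where u: "x = (\<lambda>k. \<Sum>s\<in>S. u s * vrow n g (a * s mod n) k)"
    using span_rep[OF finS] x by metis
  define \<beta> where "\<beta> = g ^ a"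
  define p where "p = (\<Sum>s\<in>S. monom (u s) (js s))"
  have polyp: "poly p y = (\<Sum>s\<in>S. u s * y ^ (js s))" for y
    unfolding p_def by (simp add: poly_sum poly_monom)
  have xk: "x k = \<beta> ^ (s0 * k) * poly p (\<beta> ^ k)" if "k < n" for k
  proof -
    have "x k = (\<Sum>s\<in>S. u s * g ^ (a * s * k))"
      unfolding u using that by (simp add: vrow_def gmodk)
    also have "\<dots> = (\<Sum>s\<in>S. u s * (\<beta> ^ (s0 * k) * (\<beta> ^ k) ^ (js s)))"
      by (rule sum.cong) (auto simp: expo \<beta>_def)
    also have "\<dots> = \<beta> ^ (s0 * k) * poly p (\<beta> ^ k)"
      unfolding polyp by (simp add: sum_distrib_left ac_simps)
    finally show ?thesis .
  qed
  have xk2: "x k = 0" if "k \<ge> n" for k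
    unfolding u using that by (simp add: vrow_def)
  have p0: "p \<noteq> 0"
  proof
    assume "p = 0"
    hence "x k = 0" for k using xk xk2 by (cases "k < n") auto
    thus False using x0 by (auto simp: fun_eq_iff)
  qed
  have Sne: "S \<noteq> {}" using p0 by (auto simp: p_def)
  then obtain s1 where "s1 \<in> S" by blast
  hence L0: "L > 0" using js by fastforce
  have degp: "degree p \<le> L - 1"
    unfolding p_def
  proof (rule degree_sum_le[OF finS])
    fix s assume "s \<in> S"
    hence "js s \<le> L - 1" using js by fastforce
    thus "degree (monom (u s) (js s)) \<le> L - 1" using degree_monom_le[of "u s" "js s"] by linarith
  qed
  have b0: "\<beta> \<noteq> 0" using g0 by (simp add: \<beta>_def)
  have Zsub: "{k. k < n \<and> x k = 0} \<subseteq> {..<n}" by auto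
  have "card {k. k < n \<and> x k = 0} \<le> degree p"
  proof (rule few_roots[OF p0])
    show "inj_on (\<lambda>k. \<beta> ^ k) {k. k < n \<and> x k = 0}"
      using inj_on_subset[OF inj_beta[OF gn prim n1 ca] Zsub] by (simp add: \<beta>_def)
    show "\<forall>k\<in>{k. k < n \<and> x k = 0}. poly p (\<beta> ^ k) = 0"
      using xk b0 by auto
  qed
  thus ?thesis using zeros_count[of x] degp L0 by linarith
qed


lemma distC:
  fixes b :: nat and R :: "nat set" and c :: "nat \<Rightarrow> 'a"
  assumes cb: "coprime b n"
    and c: "c \<in> ker_code n g (sumset_mod n (smult_mod n a S) (smult_mod n b R))" and c0: "c \<noteq> 0"
    and Sb: "L + 2 \<le> card S + dT n g R" and SL: "card S \<le> L" and Sne: "S \<noteq> {}"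
  shows "L < wt n c"
proof (rule ccontr)
  assume "\<not> L < wt n c"
  hence wL: "wt n c \<le> L" by simp
  define dR where "dR = dT n g R"
  define w where "w = wt n c"
  define W where "W = {k. k < n \<and> c k \<noteq> 0}"
  have cW: "card W = w" by (simp add: W_def w_def wt_def)
  have cFn: "c \<in> Fn n" using c by (simp add: ker_code_def)
  have Rl: "dR \<le> wt n v" if "v \<in> Fn n" "v \<noteq> 0" "\<forall>r\<in>R. (\<Sum>k<n. g ^ (r * b * k) * v k) = 0" for v
    unfolding dR_def by (rule ker_wt[OF n1 cb gn that])
  have orth: "(\<Sum>k<n. g ^ ((a * s + b * r) * k) * c k) = 0" if "s \<in> S" "r \<in> R" for s r
    by (rule C_orth[OF gn c that])
  have dR2: "dR \<ge> 2" using Sb SL unfolding dR_def by linarith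
  have gpos: "g ^ e \<noteq> 0" for e using g0 by simp
  show False
  proof (cases "w < dR")
    case True
    obtain s1 where s1: "s1 \<in> S" using Sne by blast
    define v where "v k = (if k < n then g ^ (a * s1 * k) * c k else 0)" for k
    have vFn: "v \<in> Fn n" by (simp add: v_def Fn_def)
    have wv: "wt n v = w" unfolding w_def wt_def v_def using gpos by (intro arg_cong[where f=card]) auto
    have "v \<noteq> 0" using wt_pos[OF cFn c0] wv wt_zero unfolding w_def by (metis less_irrefl)
    moreover have "\<forall>r\<in>R. (\<Sum>k<n. g ^ (r * b * k) * v k) = 0"
    proof
      fix r assume r: "r \<in> R"
      have "(\<Sum>k<n. g ^ (r * b * k) * v k) = (\<Sum>k<n. g ^ ((a * s1 + b * r) * k) * c k)"
      proof (rule sum.cong)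
        fix k assume "k \<in> {..<n}"
        have "g ^ ((a * s1 + b * r) * k) = g ^ (r * b * k) * g ^ (a * s1 * k)"
          unfolding power_add[symmetric] by (simp add: algebra_simps)
        thus "g ^ (r * b * k) * v k = g ^ ((a * s1 + b * r) * k) * c k"
          using \<open>k \<in> {..<n}\<close> by (simp add: v_def)
      qed simp
      thus "(\<Sum>k<n. g ^ (r * b * k) * v k) = 0" using orth[OF s1 r] by simp
    qed
    ultimately have "dR \<le> w" using Rl[OF vFn] wv by simp
    thus False using True by simp
  next
    case False
    hence wdR: "dR \<le> w" by simp
    define m where "m = w - dR + 1"
    have mw: "m \<le> w" using wdR dR2 by (simp add: m_def)
    have finW: "finite W" by (simp add: W_def)
    obtain Z where Z: "Z \<subseteq> W" "card Z = m" using obtain_subset_with_card_n[OF mw[folded cW]] by blast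
    have finZ: "finite Z" using Z(1) finW finite_subset by blast
    define \<beta> where "\<beta> = g ^ a"
    have b0: "\<beta> \<noteq> 0" using g0 by (simp add: \<beta>_def)
    define PZ where "PZ = (\<Prod>k\<in>Z. [:- (\<beta> ^ k), 1:])"
    have PZ0: "PZ \<noteq> 0" unfolding PZ_def using finZ by (simp add: prod_zero_iff)
    have degPZ: "degree PZ \<le> m"
    proof -
      have "degree PZ \<le> sum (degree \<circ> (\<lambda>k. [:- (\<beta> ^ k), 1:])) Z"
        unfolding PZ_def by (rule degree_prod_sum_le[OF finZ])
      also have "\<dots> = card Z" by simp
      finally show ?thesis using Z(2) by simp
    qed
    have PZroot: "poly PZ (\<beta> ^ k) = 0" if "k \<in> Z" for k
      unfolding PZ_def poly_prod using finZ that by (auto simp: prod_zero_iff)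
    define G where "G = {j. j < L \<and> j \<notin> js ` S}"
    have jsS: "js ` S \<subseteq> {..<L}" using js by auto
    have GD: "G = {..<L} - js ` S" by (auto simp: G_def)
    have cG: "card G = L - card S"
      unfolding GD using card_Diff_subset[OF finite_imageI[OF finS] jsS] card_image[OF inj_js] by simp
    define N where "N = dR - 1"
    have GN: "card G < N" using cG Sb SL unfolding N_def dR_def by linarith
    define \<phi> where "\<phi> j i = coeff (monom 1 i * PZ) j" for j i
    obtain xx where xx: "\<exists>i<N. xx i \<noteq> 0" "\<forall>j\<in>G. (\<Sum>i<N. \<phi> j i * xx i) = 0"
      using linsol[of G N \<phi>] GN by (auto simp: G_def)
    define q where "q = (\<Sum>i<N. monom (xx i) i)"
    have q0: "q \<noteq> 0"
    proof
      assume "q = 0"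
      obtain i where i: "i < N" "xx i \<noteq> 0" using xx(1) by blast
      have "coeff q i = xx i" unfolding q_def using coeff_sum_monom_set[of "{..<N}" i xx] i by simp
      thus False using \<open>q = 0\<close> i by simp
    qed
    have degq: "degree q \<le> N - 1"
      unfolding q_def
    proof (rule degree_sum_le)
      fix i assume "i \<in> {..<N}"
      thus "degree (monom (xx i) i) \<le> N - 1" using degree_monom_le[of "xx i" i] by simp
    qed simp
    define h where "h = q * PZ"
    have h0: "h \<noteq> 0" using q0 PZ0 by (simp add: h_def)
    have degh: "degree h \<le> w - 1"
    proof -
      have "degree h \<le> degree q + degree PZ" unfolding h_def by (rule degree_mult_le)
      thus ?thesis using degq degPZ unfolding N_def m_def using wdR dR2 by linarith
    qed
    have dhL: "degree h < L" using degh wL dR2 wdR unfolding w_def by linarith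
    have coeffh: "coeff h j = (\<Sum>i<N. \<phi> j i * xx i)" for j
    proof -
      have "h = (\<Sum>i<N. smult (xx i) (monom 1 i * PZ))"
        unfolding h_def q_def sum_distrib_right
        by (intro sum.cong refl) (simp del: mult_smult_left add: mult_smult_left[symmetric] smult_monom)
      thus ?thesis by (simp add: coeff_sum \<phi>_def mult.commute)
    qed
    have hG: "coeff h j = 0" if "j \<in> G" for j using coeffh xx(2) that by simp
    have hZ: "poly h (\<beta> ^ k) = 0" if "k \<in> Z" for k using PZroot[OF that] by (simp add: h_def)
    have polyh: "poly h y = (\<Sum>j<L. coeff h j * y ^ j)" for y
    proof -
      have "poly h y = (\<Sum>j\<le>degree h. coeff h j * y ^ j)" by (rule poly_altdef)
      also have "\<dots> = (\<Sum>j<L. coeff h j * y ^ j)"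
        by (rule sum.mono_neutral_left) (use dhL in \<open>auto simp: coeff_eq_0\<close>)
      finally show ?thesis .
    qed
    have "\<exists>k1\<in>W. poly h (\<beta> ^ k1) \<noteq> 0"
    proof (rule ccontr)
      assume "\<not> (\<exists>k1\<in>W. poly h (\<beta> ^ k1) \<noteq> 0)"
      hence "card W \<le> degree h"
        using few_roots[OF h0, of "\<lambda>k. \<beta> ^ k" W] inj_on_subset[OF inj_beta[OF gn prim n1 ca], of W]
        by (auto simp: W_def \<beta>_def)
      thus False using degh cW dR2 wdR by linarith
    qed
    then obtain k1 where k1: "k1 \<in> W" "poly h (\<beta> ^ k1) \<noteq> 0" by blast
    define v where "v k = (if k < n then \<beta> ^ (s0 * k) * poly h (\<beta> ^ k) * c k else 0)" for k
    have vFn: "v \<in> Fn n" by (simp add: v_def Fn_def)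
    have "v k1 \<noteq> 0" using k1 b0 by (simp add: v_def W_def)
    hence v0: "v \<noteq> 0" by auto
    have "{k. k < n \<and> v k \<noteq> 0} \<subseteq> W - Z"
      using hZ by (auto simp: v_def W_def)
    hence "wt n v \<le> card (W - Z)" unfolding wt_def by (intro card_mono) (use finW in auto)
    also have "card (W - Z) = w - m" using card_Diff_subset[OF finZ Z(1)] Z(2) cW by simp
    finally have wtv: "wt n v < dR" using wdR dR2 unfolding m_def by linarith
    have "\<forall>r\<in>R. (\<Sum>k<n. g ^ (r * b * k) * v k) = 0"
    proof
      fix r assume r: "r \<in> R"
      define T where "T j = (\<Sum>k<n. g ^ (r * b * k) * (\<beta> ^ (s0 * k) * (\<beta> ^ k) ^ j * c k))" for j
      have "(\<Sum>k<n. g ^ (r * b * k) * v k)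
          = (\<Sum>k<n. \<Sum>j<L. coeff h j * (g ^ (r * b * k) * (\<beta> ^ (s0 * k) * (\<beta> ^ k) ^ j * c k)))"
      proof (rule sum.cong)
        fix k assume "k \<in> {..<n}"
        thus "g ^ (r * b * k) * v k = (\<Sum>j<L. coeff h j * (g ^ (r * b * k) * (\<beta> ^ (s0 * k) * (\<beta> ^ k) ^ j * c k)))"
          by (simp add: v_def polyh sum_distrib_left sum_distrib_right ac_simps)
      qed simp
      also have "\<dots> = (\<Sum>j<L. coeff h j * T j)"
        unfolding T_def by (subst sum.swap) (simp add: sum_distrib_left)
      also have "\<dots> = 0"
      proof (rule sum.neutral, rule ballI)
        fix j assume j: "j \<in> {..<L}"
        show "coeff h j * T j = 0"
        proof (cases "j \<in> G")
          case True thus ?thesis using hG by simp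
        next
          case False
          then obtain s where s: "s \<in> S" "j = js s" using j by (auto simp: G_def)
          have "T j = (\<Sum>k<n. g ^ ((a * s + b * r) * k) * c k)"
            unfolding T_def
          proof (rule sum.cong)
            fix k assume "k \<in> {..<n}"
            have "\<beta> ^ (s0 * k) * (\<beta> ^ k) ^ j = g ^ (a * s * k)" using expo[OF s(1)] s(2) by (simp add: \<beta>_def)
            moreover have "g ^ ((a * s + b * r) * k) = g ^ (r * b * k) * g ^ (a * s * k)"
          unfolding power_add[symmetric] by (simp add: algebra_simps)
            ultimately show "g ^ (r * b * k) * (\<beta> ^ (s0 * k) * (\<beta> ^ k) ^ j * c k) = g ^ ((a * s + b * r) * k) * c k"
              by (simp add: ac_simps)
          qed simp
          thus ?thesis using orth[OF s(1) r] by simp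
        qed
      qed
      finally show "(\<Sum>k<n. g ^ (r * b * k) * v k) = 0" .
    qed
    hence "dR \<le> wt n v" using Rl[OF vFn v0] by simp
    thus False using wtv by simp
  qed
qed

end


lemma gauss2: "2 * (\<Sum>i=1..m. (int i)) = int m * (int m + 1)"
  by (induction m) (auto simp: algebra_simps)

theorem theorem6p4:
  fixes n q a b l t :: nat
    and g :: "'a::field"
    and S R :: "nat set"
  assumes n_pos: "n \<ge> 1"
    and q_coprime: "coprime n q"
    and Fq: "has_subfield_card TYPE('a) q"
    and g_prim: "g ^ n = 1" "\<forall>m. 0 < m \<and> m < n \<longrightarrow> g ^ m \<noteq> 1"
    and l_ge: "l \<ge> 2"
    and ab: "0 < a" "a \<le> n" "0 < b" "b \<le> n" "coprime a n" "coprime b n"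
    and SR: "S \<subseteq> {1..n}" "R \<subseteq> {1..n}"
    and Sbar: "closure_card n S + 2 \<le> card S + dT n g R"
    and S_t: "card S > t"
    and dS_t: "dT n g S > t"
    and A_def: "A = gen_code n g (smult_mod n a S)"
    and B_def: "B = gen_code n g (smult_mod n b R)"
    and C_def: "C = ker_code n g (sumset_mod n (smult_mod n a S) (smult_mod n b R))"
    and k_def: "k = cdim C"
    and cond_i: "\<forall>i\<in>{1..l-1}. starprod (dual n B) (cpow C i) \<subset> Fn n"
    and cond_ii: "\<forall>D. is_cyclic n D \<and> D \<subseteq> B \<and> D \<noteq> {0} \<longrightarrow> \<not> degenerated n D"
    and delta_def: "int n - int k = int (card S) + int (card R) - 1 + delta"
    and gam_def: "\<forall>i\<in>{1..l-1}. int (cdim B) =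
        int (cdim (dual n (starprod (dual n B) (cpow C i)))) + int i * int (cdim C) - int i + gam i"
    and bound: "int t \<le> int l * int n - (int (l * (l + 1) div 2) * (int k - 1)
        + int l * (int (card S) + delta) + (\<Sum>i=1..l-1. gam i))"
  shows "locating_pair n l t A B C"
proof -
  note gn = g_prim(1) and prim = g_prim(2) and n1 = n_pos
  obtain s0 L where L: "L \<le> n" "closure_card n S = L"
    "\<forall>s\<in>S. \<exists>j<L. s mod n = (s0 + j) mod n" "card S \<le> L"
    by (rule interval_setup[OF n1 SR(1)])
  define js where "js s = (SOME j. j < L \<and> s mod n = (s0 + j) mod n)" for s
  have js: "\<forall>s\<in>S. js s < L \<and> s mod n = (s0 + js s) mod n"
  proof
    fix s assume "s \<in> S"
    hence "\<exists>j. j < L \<and> s mod n = (s0 + j) mod n" using L(3) by blast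
    thus "js s < L \<and> s mod n = (s0 + js s) mod n" unfolding js_def by (rule someI_ex)
  qed
  have Sne: "S \<noteq> {}" using S_t by auto
  have cSn: "card S \<le> n"
    using card_mono[OF _ SR(1)] by simp
  have P1: "starprod A B \<subseteq> dual n C"
    unfolding A_def B_def
  proof (rule starprod_sub)
    fix i j c assume i: "i \<in> smult_mod n a S" and j: "j \<in> smult_mod n b R" and c: "c \<in> C"
    obtain s where s: "s \<in> S" "i = a * s mod n" using i by (auto simp: smult_mod_def)
    obtain r where r: "r \<in> R" "j = b * r mod n" using j by (auto simp: smult_mod_def)
    have "g ^ ((i + j) * k) = g ^ ((a * s + b * r) * k)" for k
    proof (rule gpow_cong[OF gn])
      have "(i + j) mod n = (a * s + b * r) mod n" using s r by (simp add: mod_add_eq)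
      thus "(i + j) * k mod n = (a * s + b * r) * k mod n" by (metis mod_mult_left_eq)
    qed
    thus "(\<Sum>k<n. g ^ ((i + j) * k) * c k) = 0"
      using C_orth[OF gn c[unfolded C_def] s(1) r(1)] by simp
  qed
  have P2: "cdim A > t"
    using dim_gen_code[OF gn prim n1 smult_sub[OF n1]] card_smult[OF ab(5) SR(1)] S_t
    unfolding A_def by simp
  have P3: "mindist n (dual n A) > t"
  proof -
    have "t + 1 \<le> mindist n (dual n A)"
    proof (rule mindist_ge)
      fix c assume c: "c \<in> dual n A" "c \<noteq> 0"
      hence ck: "c \<in> ker_code n g (smult_mod n a S)" using dual_sub_ker A_def by blast
      have "dT n g S \<le> wt n c"
      proof (rule ker_wt[OF n1 ab(5) gn _ c(2)])
        show "c \<in> Fn n" using ck by (simp add: ker_code_def)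
        show "\<forall>t\<in>S. (\<Sum>k<n. g ^ (t * a * k) * c k) = 0"
        proof
          fix s assume s: "s \<in> S"
          have "(\<Sum>k<n. g ^ ((a * s mod n) * k) * c k) = 0"
            using ck s by (auto simp: ker_code_def smult_mod_def)
          moreover have "g ^ ((a * s mod n) * k) = g ^ (s * a * k)" for k
            proof (rule gpow_cong[OF gn])
            have e: "a * s * k = s * a * k" by simp
            show "a * s mod n * k mod n = s * a * k mod n" by (simp only: mod_mult_left_eq e)
          qed
          ultimately show "(\<Sum>k<n. g ^ (s * a * k) * c k) = 0" by simp
        qed
      qed
      thus "t + 1 \<le> wt n c" using dS_t by simp
    next
      show "t + 1 \<le> n + 1" using S_t cSn by simp
    qed
    thus ?thesis by simp
  qed
  have P4: "mindist n A + mindist n C > n"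
  proof -
    have "n + 1 - L \<le> mindist n A"
    proof (rule mindist_ge)
      fix x assume "x \<in> A" "x \<noteq> 0"
      thus "n + 1 - L \<le> wt n x"
        using distA[OF gn prim n1 ab(5) SR(1) js, of x] A_def by simp
    qed simp
    moreover have "L + 1 \<le> mindist n C"
    proof (rule mindist_ge)
      fix c assume "c \<in> C" "c \<noteq> 0"
      thus "L + 1 \<le> wt n c"
        using distC[OF gn prim n1 ab(5) SR(1) js ab(6), of c R] C_def Sbar L(2,4) Sne by simp
    qed (use L(1) in simp)
    ultimately show ?thesis using L(1) by linarith
  qed
  have dB: "cdim B = card R"
    using dim_gen_code[OF gn prim n1 smult_sub[OF n1]] card_smult[OF ab(6) SR(2)]
    unfolding B_def by simp
  define D where "D i = cdim (dual n (starprod (dual n B) (cpow C i)))" for i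
  have sh: "(\<Sum>i=2..l. cdim (dual n (starprod (dual n B) (cpow C (i - 1))))) = (\<Sum>i=1..l-1. D i)"
  proof -
    have e: "{2..l} = {Suc 1..Suc (l - 1)}" using l_ge by auto
    have "(\<Sum>i=2..l. cdim (dual n (starprod (dual n B) (cpow C (i - 1))))) = (\<Sum>i\<in>{Suc 1..Suc (l - 1)}. D (i - 1))"
      unfolding e D_def by (rule refl)
    also have "\<dots> = (\<Sum>i=1..l-1. D (Suc i - 1))" by (rule sum.shift_bounds_cl_Suc_ivl)
    also have "\<dots> = (\<Sum>i=1..l-1. D i)" by simp
    finally show ?thesis .
  qed
  define X where "X = (\<Sum>i=1..l-1. int i)"
  define Gs where "Gs = (\<Sum>i=1..l-1. gam i)"
  define P where "P = l * (l + 1) div 2"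
  have X2: "2 * X = int (l - 1) * int l" using gauss2[of "l - 1"] l_ge by (simp add: X_def)
  have P2': "2 * int P = int l * (int l + 1)"
  proof -
    have "even (l * (l + 1))" by simp
    hence "2 * P = l * (l + 1)" unfolding P_def by simp
    hence "int (2 * P) = int (l * (l + 1))" by simp
    thus ?thesis by (simp add: algebra_simps)
  qed
  have PX: "int P = X + int l" using X2 P2' l_ge by (simp add: algebra_simps of_nat_diff)
  have sD: "(\<Sum>i=1..l-1. int (D i)) = int (l - 1) * int (card R) - X * (int k - 1) - Gs"
  proof -
    have "(\<Sum>i=1..l-1. int (D i)) = (\<Sum>i=1..l-1. int (card R) - int i * (int k - 1) - gam i)"
      by (rule sum.cong) (use gam_def dB k_def in \<open>auto simp: D_def algebra_simps\<close>)
    also have "\<dots> = int (l - 1) * int (card R) - X * (int k - 1) - Gs"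
      by (simp add: sum_subtractf X_def Gs_def sum_distrib_right)
    finally show ?thesis .
  qed
  have nn: "int n = int k + int (card S) + int (card R) - 1 + delta" using delta_def by linarith
  have bnd: "int t \<le> int l * int n - (int P * (int k - 1) + int l * (int (card S) + delta) + Gs)"
    using bound by (simp add: P_def Gs_def)
  have key: "int l * int n - (int P * (int k - 1) + int l * (int (card S) + delta) + Gs)
      = int (card R) + (int (l - 1) * int (card R) - X * (int k - 1) - Gs)"
    unfolding nn PX using l_ge by (simp add: algebra_simps of_nat_diff)
  have P5: "cdim B + (\<Sum>i=2..l. cdim (dual n (starprod (dual n B) (cpow C (i - 1))))) \<ge> t"
  proof -
    have "int t \<le> int (card R) + (\<Sum>i=1..l-1. int (D i))" using bnd key sD by simp
    moreover have "int (cdim B + (\<Sum>i=1..l-1. D i)) = int (cdim B) + (\<Sum>i=1..l-1. int (D i))"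
      by (simp add: of_nat_sum)
    ultimately have "int t \<le> int (cdim B + (\<Sum>i=1..l-1. D i))" using dB by simp
    hence "t \<le> cdim B + (\<Sum>i=1..l-1. D i)" by (simp only: of_nat_le_iff)
    thus ?thesis unfolding sh .
  qed
  show ?thesis unfolding locating_pair_def using P1 P2 P3 P4 P5 by blast
qed


end
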